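(* Let $A$ be a brick gentle algebra. For any $\widetilde{\mathfrak T}\in\mathrm{torshad}(\Pi(A))$, the set of strings $B(\widetilde{\mathfrak T})$ is a biclosed set.
   Context: Setting: $k$ a field, $A=kQ/I$, $Q$ finite connected quiver, $I$ admissible generated by paths (paths composed right to left). Gentle: (S1) each vertex has at most two incoming and two outgoing arrows; (S2) for each arrow $\alpha$ at most one $\beta$ with $\alpha\beta$ a path not in $I$ and at most one $\gamma$ with $\gamma\alpha$ a path not in $I$; (G1) $I$ generated by paths of length two; (G2) for each arrow $\alpha$ at most one $\beta$ with $\alpha\beta$ a path in $I$ and at most one $\gamma$ with $\gamma\alpha$ a path in $I$. Brick gentle: moreover every indecomposable module has endomorphism ring a division ring. Strings (for any $k\Gamma/J$, $J$ generated by paths): words $w=\gamma_d^{\epsilon_d}\cdots\gamma_1^{\epsilon_1}$ in arrows and formal inverses ($s(\gamma^{-1})=t(\gamma)$, $t(\gamma^{-1})=s(\gamma)$), consecutive letters composable, no $\gamma\gamma^{-1}$ or $\gamma^{-1}\gamma$, neither $w$ nor $w^{-1}$ containing a subword which is a path in $J$; plus length-zero strings; $w\sim w^{-1}$. String module $M(w)$: basis $b_1,\dots,b_{d+1}$, $b_j$ at vertex $x_j$ ($x_1=s(\gamma_1^{\epsilon_1})$, $x_{i+1}=t(\gamma_i^{\epsilon_i})$); $\gamma_i$ sends $b_i\mapsto b_{i+1}$ if $\epsilon_i=1$, $b_{i+1}\mapsto b_i$ if $\epsilon_i=-1$, other actions zero. A concatenation of $u,v\in\mathrm{Str}(A)$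 is a string $v\gamma^{\pm1}u$, $\gamma\in Q_1$; $X\subseteq\mathrm{Str}(A)$ is closed if it contains all concatenations of its elements, biclosed if $X$ and its complement are closed. For $w$ of length $d$, $w=w_1\gamma_j^{\epsilon_j}w_2$ ($1\le j\le d$) gives a break $\{w_1,w_2\}$ with splits $w_1,w_2$. Labels $\mathcal S$: pairs $w_{\mathcal D}=(w,\mathcal D)$, $\mathcal D$ a set of $d$ splits of $w$ no two in the same break, modulo $(w,\mathcal D)\sim(w^{-1},\mathcal D^{-1})$. $\Pi(A)=k\overline Q/\overline I$: $\overline Q$ adds $\gamma^*:t(\gamma)\to s(\gamma)$ for each $\gamma\in Q_1$; $\overline I$ generated by $\beta\alpha,\alpha^*\beta^*$ for paths $\beta\alpha\in I$ of length two. A string of $\Pi(A)$ specializes to the word obtained by replacing $\gamma^*$ by $\gamma^{-1}$ and $(\gamma^* )^{-1}$ by $\gamma$. $\mathcal M$ is the additive closure of all $M(\widetilde w)$ with $\widetilde w$ a string of $\Pi(A)$ specializing to a string of $A$. The map $\mathrm{str}$: for $w_{\mathcal D}$, $w=\gamma_d^{\epsilon_d}\cdots\gamma_1^{\epsilon_1}$, replace the $i$-th letter by $\gamma_i$ if $w=u\gamma_iw'$ with $w'\in\mathcal D$; $\gamma_i^*$ if $w=u\gamma_i^{-1}w'$ with $w'\in\mathcal D$; $\gamma_i^{-1}$ if $w=w'\gamma_i^{-1}u$ with $w'\in\mathcal D$; $(\gamma_i^* )^{-1}$ if $w=w'\gamma_iu$ with $w'\in\mathcal D$ ($u$ possibly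 empty); $\mathrm{str}$ is a bijection from $\mathcal S$ onto the strings of $\Pi(A)$ specializing to strings of $A$. $\mathrm{torshad}(\Pi(A))$ is the set of all $\mathcal T\cap\mathcal M$ with $\mathcal T$ a torsion class (closed under quotients and extensions) of $\mathrm{mod}(\Pi(A))$. For $\widetilde{\mathfrak T}\in\mathrm{torshad}(\Pi(A))$, $B(\widetilde{\mathfrak T}):=\{w\in\mathrm{Str}(A)\mid M(\mathrm{str}(w_{\mathcal D}))\in\widetilde{\mathfrak T}\text{ for some }\mathcal D\}$. *)

theory Defs
  imports Main
begin

text \<open>A pair (b, a) in qrels stands for the length-two path b a
  (paths composed right to left: a first, then b).  The ideal is the one
  generated by these paths.\<close>

record ('v, 'a) bq =
  verts :: "'v set"
  arrs  :: "'a set"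
  qsrc  :: "'a \<Rightarrow> 'v"
  qtgt  :: "'a \<Rightarrow> 'v"
  qrels :: "('a \<times> 'a) set"

text \<open>Paths as lists of arrows in order of application.\<close>
definition is_path :: "('v,'a) bq \<Rightarrow> 'a list \<Rightarrow> bool" where
  "is_path Q p \<longleftrightarrow> (\<forall>a\<in>set p. a \<in> arrs Q) \<and>
     (\<forall>i. Suc i < length p \<longrightarrow> qtgt Q (p ! i) = qsrc Q (p ! Suc i))"

definition connected_quiver :: "('v,'a) bq \<Rightarrow> bool" where
  "connected_quiver Q \<longleftrightarrow>
     (\<forall>v\<in>verts Q. \<forall>w\<in>verts Q. (v, w) \<in>
        ({(qsrc Q a, qtgt Q a) | a. a \<in> arrs Q} \<union> {(qtgt Q a, qsrc Q a) | a. a \<in> arrs Q})\<^sup>*)"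

text \<open>Gentle bound quiver: finite connected quiver, admissible ideal generated
  by the paths of length two in qrels (so (G1) is built in), and (S1), (S2), (G2).\<close>
definition gentle :: "('v,'a) bq \<Rightarrow> bool" where
  "gentle Q \<longleftrightarrow>
     finite (verts Q) \<and> finite (arrs Q) \<and>
     (\<forall>a\<in>arrs Q. qsrc Q a \<in> verts Q \<and> qtgt Q a \<in> verts Q) \<and>
     connected_quiver Q \<and>
     qrels Q \<subseteq> {(b, a). a \<in> arrs Q \<and> b \<in> arrs Q \<and> qtgt Q a = qsrc Q b} \<and>
     (\<exists>N. \<forall>p. is_path Q p \<and> length p \<ge> N \<longrightarrow>
            (\<exists>i. Suc i < length p \<and> (p ! Suc i, p ! i) \<in> qrels Q)) \<and>
     (\<forall>v\<in>verts Q. card {a\<in>arrs Q. qtgt Q a = v} \<le> 2 \<and> card {a\<in>arrs Q. qsrc Q a = v} \<le> 2) \<and>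
     (\<forall>a\<in>arrs Q.
        (\<forall>b\<in>arrs Q. \<forall>b'\<in>arrs Q.
           qtgt Q b = qsrc Q a \<and> (a, b) \<notin> qrels Q \<and>
           qtgt Q b' = qsrc Q a \<and> (a, b') \<notin> qrels Q \<longrightarrow> b = b') \<and>
        (\<forall>c\<in>arrs Q. \<forall>c'\<in>arrs Q.
           qtgt Q a = qsrc Q c \<and> (c, a) \<notin> qrels Q \<and>
           qtgt Q a = qsrc Q c' \<and> (c', a) \<notin> qrels Q \<longrightarrow> c = c') \<and>
        (\<forall>b\<in>arrs Q. \<forall>b'\<in>arrs Q.
           qtgt Q b = qsrc Q a \<and> (a, b) \<in> qrels Q \<and>
           qtgt Q b' = qsrc Q a \<and> (a, b') \<in> qrels Q \<longrightarrow> b = b') \<and>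
        (\<forall>c\<in>arrs Q. \<forall>c'\<in>arrs Q.
           qtgt Q a = qsrc Q c \<and> (c, a) \<in> qrels Q \<and>
           qtgt Q a = qsrc Q c' \<and> (c', a) \<in> qrels Q \<longrightarrow> c = c'))"

type_synonym 'k mat = "nat \<Rightarrow> nat \<Rightarrow> 'k"
type_synonym 'k vec = "nat \<Rightarrow> 'k"
text \<open>A representation: dimension at each vertex and a matrix for each arrow
  (rows indexed by the target space, columns by the source space).\<close>
type_synonym ('v, 'a, 'k) rep = "('v \<Rightarrow> nat) \<times> ('a \<Rightarrow> 'k mat)"

definition mmul :: "nat \<Rightarrow> 'k::field mat \<Rightarrow> 'k mat \<Rightarrow> 'k mat" where
  "mmul n A B = (\<lambda>i j. \<Sum>m<n. A i m * B m j)"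

definition mapp :: "nat \<Rightarrow> 'k::field mat \<Rightarrow> 'k vec \<Rightarrow> 'k vec" where
  "mapp n A x = (\<lambda>i. \<Sum>j<n. A i j * x j)"

definition is_rep :: "('v,'a) bq \<Rightarrow> ('v,'a,'k::field) rep \<Rightarrow> bool" where
  "is_rep Q M \<longleftrightarrow> (case M of (d, m) \<Rightarrow>
     (\<forall>v. v \<notin> verts Q \<longrightarrow> d v = 0) \<and>
     (\<forall>a. a \<notin> arrs Q \<longrightarrow> m a = (\<lambda>i j. 0)) \<and>
     (\<forall>a\<in>arrs Q. \<forall>i j. i \<ge> d (qtgt Q a) \<or> j \<ge> d (qsrc Q a) \<longrightarrow> m a i j = 0) \<and>
     (\<forall>(b, a)\<in>qrels Q. \<forall>i<d (qtgt Q b). \<forall>j<d (qsrc Q a).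
        mmul (d (qtgt Q a)) (m b) (m a) i j = 0))"

definition is_morph :: "('v,'a) bq \<Rightarrow> ('v,'a,'k::field) rep \<Rightarrow> ('v,'a,'k) rep \<Rightarrow> ('v \<Rightarrow> 'k mat) \<Rightarrow> bool" where
  "is_morph Q M N f \<longleftrightarrow> (case M of (dM, mM) \<Rightarrow> case N of (dN, mN) \<Rightarrow>
     (\<forall>a\<in>arrs Q. \<forall>i<dN (qtgt Q a). \<forall>j<dM (qsrc Q a).
        mmul (dN (qsrc Q a)) (mN a) (f (qsrc Q a)) i j = mmul (dM (qtgt Q a)) (f (qtgt Q a)) (mM a) i j))"

text \<open>Linear map k^n \<rightarrow> k^m given by matrix A.\<close>
definition lin_surj :: "nat \<Rightarrow> nat \<Rightarrow> 'k::field mat \<Rightarrow> bool" where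
  "lin_surj n m A \<longleftrightarrow> (\<forall>y. \<exists>x. \<forall>i<m. mapp n A x i = y i)"

definition lin_inj :: "nat \<Rightarrow> nat \<Rightarrow> 'k::field mat \<Rightarrow> bool" where
  "lin_inj n m A \<longleftrightarrow> (\<forall>x. (\<forall>i<m. mapp n A x i = 0) \<longrightarrow> (\<forall>j<n. x j = 0))"

definition surj_morph :: "('v,'a) bq \<Rightarrow> ('v,'a,'k::field) rep \<Rightarrow> ('v,'a,'k) rep \<Rightarrow> ('v \<Rightarrow> 'k mat) \<Rightarrow> bool" where
  "surj_morph Q M N f \<longleftrightarrow> is_morph Q M N f \<and>
     (\<forall>v\<in>verts Q. lin_surj (fst M v) (fst N v) (f v))"

definition iso_morph :: "('v,'a) bq \<Rightarrow> ('v,'a,'k::field) rep \<Rightarrow> ('v,'a,'k) rep \<Rightarrow> ('v \<Rightarrow> 'k mat) \<Rightarrow> bool" where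
  "iso_morph Q M N f \<longleftrightarrow> is_morph Q M N f \<and>
     (\<forall>v\<in>verts Q. lin_surj (fst M v) (fst N v) (f v) \<and> lin_inj (fst M v) (fst N v) (f v))"

definition isomorphic :: "('v,'a) bq \<Rightarrow> ('v,'a,'k::field) rep \<Rightarrow> ('v,'a,'k) rep \<Rightarrow> bool" where
  "isomorphic Q M N \<longleftrightarrow> (\<exists>f. iso_morph Q M N f)"

definition short_exact :: "('v,'a) bq \<Rightarrow> ('v,'a,'k::field) rep \<Rightarrow> ('v,'a,'k) rep \<Rightarrow> ('v,'a,'k) rep
     \<Rightarrow> ('v \<Rightarrow> 'k mat) \<Rightarrow> ('v \<Rightarrow> 'k mat) \<Rightarrow> bool" where
  "short_exact Q L M N f g \<longleftrightarrow> is_morph Q L M f \<and> surj_morph Q M N g \<and>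
     (\<forall>v\<in>verts Q. lin_inj (fst L v) (fst M v) (f v) \<and>
        (\<forall>y. (\<forall>i<fst N v. mapp (fst M v) (g v) y i = 0) \<longleftrightarrow>
             (\<exists>x. \<forall>i<fst M v. mapp (fst L v) (f v) x i = y i)))"

definition torsion_class :: "('v,'a) bq \<Rightarrow> ('v,'a,'k::field) rep set \<Rightarrow> bool" where
  "torsion_class Q T \<longleftrightarrow> T \<subseteq> {M. is_rep Q M} \<and>
     (\<forall>M\<in>T. \<forall>N f. is_rep Q N \<and> surj_morph Q M N f \<longrightarrow> N \<in> T) \<and>
     (\<forall>L\<in>T. \<forall>N\<in>T. \<forall>M f g. is_rep Q M \<and> short_exact Q L M N f g \<longrightarrow> M \<in> T)"

definition zero_rep :: "('v,'a,'k::field) rep" where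
  "zero_rep = (\<lambda>_. 0, \<lambda>_ _ _. 0)"

definition dsum :: "('v,'a) bq \<Rightarrow> ('v,'a,'k::field) rep \<Rightarrow> ('v,'a,'k) rep \<Rightarrow> ('v,'a,'k) rep" where
  "dsum Q M N = (case M of (dM, mM) \<Rightarrow> case N of (dN, mN) \<Rightarrow>
     (\<lambda>v. dM v + dN v,
      \<lambda>a i j. if i < dM (qtgt Q a) \<and> j < dM (qsrc Q a) then mM a i j
             else if dM (qtgt Q a) \<le> i \<and> dM (qsrc Q a) \<le> j
               then mN a (i - dM (qtgt Q a)) (j - dM (qsrc Q a)) else 0))"

definition nonzero_rep :: "('v,'a) bq \<Rightarrow> ('v,'a,'k::field) rep \<Rightarrow> bool" where
  "nonzero_rep Q M \<longleftrightarrow> (\<exists>v\<in>verts Q. fst M v > 0)"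

definition indecomposable :: "('v,'a) bq \<Rightarrow> ('v,'a,'k::field) rep \<Rightarrow> bool" where
  "indecomposable Q M \<longleftrightarrow> is_rep Q M \<and> nonzero_rep Q M \<and>
     \<not> (\<exists>M1 M2. is_rep Q M1 \<and> is_rep Q M2 \<and> nonzero_rep Q M1 \<and> nonzero_rep Q M2 \<and>
            isomorphic Q M (dsum Q M1 M2))"

text \<open>End(M) is a division ring: every nonzero endomorphism is invertible
  (End(M) is nonzero since M is nonzero).\<close>
definition End_division :: "('v,'a) bq \<Rightarrow> ('v,'a,'k::field) rep \<Rightarrow> bool" where
  "End_division Q M \<longleftrightarrow> (\<forall>f. is_morph Q M M f \<and>
      (\<exists>v\<in>verts Q. \<exists>i<fst M v. \<exists>j<fst M v. f v i j \<noteq> 0) \<longrightarrow> iso_morph Q M M f)"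

definition brick_gentle :: "('v,'a) bq \<Rightarrow> 'k::field itself \<Rightarrow> bool" where
  "brick_gentle Q _ \<longleftrightarrow> gentle Q \<and>
     (\<forall>M :: ('v,'a,'k) rep. indecomposable Q M \<longrightarrow> End_division Q M)"

text \<open>A letter (a, True) is the arrow a, (a, False) its formal inverse.  A string
  is (x, ls): start vertex x and the letters in order of application
  (ls ! 0 = gamma_1^eps_1, the rightmost letter of the word).\<close>

definition lsrc :: "('v,'a) bq \<Rightarrow> 'a \<times> bool \<Rightarrow> 'v" where
  "lsrc Q l = (if snd l then qsrc Q (fst l) else qtgt Q (fst l))"
definition ltgt :: "('v,'a) bq \<Rightarrow> 'a \<times> bool \<Rightarrow> 'v" where
  "ltgt Q l = (if snd l then qtgt Q (fst l) else qsrc Q (fst l))"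

definition is_string :: "('v,'a) bq \<Rightarrow> 'v \<times> ('a \<times> bool) list \<Rightarrow> bool" where
  "is_string Q w \<longleftrightarrow> (case w of (x, ls) \<Rightarrow>
     x \<in> verts Q \<and> (\<forall>l\<in>set ls. fst l \<in> arrs Q) \<and>
     (ls \<noteq> [] \<longrightarrow> lsrc Q (hd ls) = x) \<and>
     (\<forall>i. Suc i < length ls \<longrightarrow>
        ltgt Q (ls ! i) = lsrc Q (ls ! Suc i) \<and>
        \<not> (fst (ls ! i) = fst (ls ! Suc i) \<and> snd (ls ! i) \<noteq> snd (ls ! Suc i)) \<and>
        (snd (ls ! i) \<and> snd (ls ! Suc i) \<longrightarrow> (fst (ls ! Suc i), fst (ls ! i)) \<notin> qrels Q) \<and>
        (\<not> snd (ls ! i) \<and> \<not> snd (ls ! Suc i) \<longrightarrow> (fst (ls ! i), fst (ls ! Suc i)) \<notin> qrels Q)))"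

definition Str :: "('v,'a) bq \<Rightarrow> ('v \<times> ('a \<times> bool) list) set" where
  "Str Q = {w. is_string Q w}"

definition endv :: "('v,'a) bq \<Rightarrow> 'v \<times> ('a \<times> bool) list \<Rightarrow> 'v" where
  "endv Q w = (if snd w = [] then fst w else ltgt Q (last (snd w)))"

definition inv_str :: "('v,'a) bq \<Rightarrow> 'v \<times> ('a \<times> bool) list \<Rightarrow> 'v \<times> ('a \<times> bool) list" where
  "inv_str Q w = (endv Q w, rev (map (\<lambda>(a, b). (a, \<not> b)) (snd w)))"

text \<open>Concatenations v gamma^{\<plusminus>1} u of u and v (u applied first).\<close>
definition concatenations :: "('v,'a) bq \<Rightarrow> 'v \<times> ('a \<times> bool) list \<Rightarrow> 'v \<times> ('a \<times> bool) list
     \<Rightarrow> ('v \<times> ('a \<times> bool) list) set" where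
  "concatenations Q u v = {(fst u, snd u @ [l] @ snd v) | l.
      fst l \<in> arrs Q \<and> lsrc Q l = endv Q u \<and> ltgt Q l = fst v} \<inter> Str Q"

text \<open>Sets of strings are represented by sets of representatives; the sets
  considered are closed under string inversion, so this is the same as working
  with strings modulo w \<sim> w^{-1}.\<close>
definition closed_set :: "('v,'a) bq \<Rightarrow> ('v \<times> ('a \<times> bool) list) set \<Rightarrow> bool" where
  "closed_set Q X \<longleftrightarrow> (\<forall>u\<in>X. \<forall>v\<in>X. concatenations Q u v \<subseteq> X)"

definition biclosed :: "('v,'a) bq \<Rightarrow> ('v \<times> ('a \<times> bool) list) set \<Rightarrow> bool" where
  "biclosed Q X \<longleftrightarrow> X \<subseteq> Str Q \<and> closed_set Q X \<and> closed_set Q (Str Q - X)"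

definition svert :: "('v,'a) bq \<Rightarrow> 'v \<times> ('a \<times> bool) list \<Rightarrow> nat \<Rightarrow> 'v" where
  "svert Q w j = (if j = 0 then fst w else ltgt Q (snd w ! (j - 1)))"

text \<open>Local index of basis vector b_j inside the space at its vertex.\<close>
definition sidx :: "('v,'a) bq \<Rightarrow> 'v \<times> ('a \<times> bool) list \<Rightarrow> nat \<Rightarrow> nat" where
  "sidx Q w j = card {j'. j' < j \<and> svert Q w j' = svert Q w j}"

definition strmod :: "('v,'a) bq \<Rightarrow> 'v \<times> ('a \<times> bool) list \<Rightarrow> ('v,'a,'k::field) rep" where
  "strmod Q w =
     (\<lambda>v. card {j. j \<le> length (snd w) \<and> svert Q w j = v},
      \<lambda>a r c. if (\<exists>i<length (snd w).
                   (snd w ! i = (a, True) \<and> c = sidx Q w i \<and> r = sidx Q w (Suc i)) \<or>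
                   (snd w ! i = (a, False) \<and> c = sidx Q w (Suc i) \<and> r = sidx Q w i))
               then 1 else 0)"

text \<open>Inl g is the arrow g, Inr g is g^*: t(g) \<rightarrow> s(g).  Relations: b a and a^* b^*
  for each relation b a of A.\<close>
definition preproj :: "('v,'a) bq \<Rightarrow> ('v, 'a + 'a) bq" where
  "preproj Q = \<lparr> verts = verts Q, arrs = Inl ` arrs Q \<union> Inr ` arrs Q,
     qsrc = case_sum (qsrc Q) (qtgt Q), qtgt = case_sum (qtgt Q) (qsrc Q),
     qrels = {(Inl b, Inl a) | b a. (b, a) \<in> qrels Q} \<union> {(Inr a, Inr b) | b a. (b, a) \<in> qrels Q} \<rparr>"

text \<open>Specialization: g^* \<mapsto> g^{-1}, (g^*)^{-1} \<mapsto> g.\<close>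
definition specialize :: "'v \<times> (('a + 'a) \<times> bool) list \<Rightarrow> 'v \<times> ('a \<times> bool) list" where
  "specialize w = (fst w, map (\<lambda>(a, b). case a of Inl g \<Rightarrow> (g, b) | Inr g \<Rightarrow> (g, \<not> b)) (snd w))"

definition Mcat :: "('v,'a) bq \<Rightarrow> ('v, 'a + 'a, 'k::field) rep set" where
  "Mcat Q = {N. is_rep (preproj Q) N \<and>
     (\<exists>ws. (\<forall>w\<in>set ws. is_string (preproj Q) w \<and> is_string Q (specialize w)) \<and>
        isomorphic (preproj Q) N (foldr (dsum (preproj Q)) (map (strmod (preproj Q)) ws) zero_rep))}"

definition torshad :: "('v,'a) bq \<Rightarrow> ('v, 'a + 'a, 'k::field) rep set set" where
  "torshad Q = {T \<inter> Mcat Q | T. torsion_class (preproj Q) T}"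

text \<open>A label (w, D): D picks one split from each of the d breaks of w.  We encode
  D positionally as a subset of {..<d}: position i (0-based, letter gamma_{i+1})
  in D means the chosen split of the i-th break is the right factor
  (letters before position i); otherwise it is the left factor.\<close>
definition labels :: "('v,'a) bq \<Rightarrow> (('v \<times> ('a \<times> bool) list) \<times> nat set) set" where
  "labels Q = {(w, D). is_string Q w \<and> D \<subseteq> {..<length (snd w)}}"

definition str_map :: "'v \<times> ('a \<times> bool) list \<Rightarrow> nat set \<Rightarrow> 'v \<times> (('a + 'a) \<times> bool) list" where
  "str_map w D = (fst w, map (\<lambda>i. case snd w ! i of (g, e) \<Rightarrow>
        if i \<in> D then (if e then Inl g else Inr g, True)
                 else (if e then Inr g else Inl g, False)) [0..<length (snd w)])"

definition Bset :: "('v,'a) bq \<Rightarrow> ('v, 'a + 'a, 'k::field) rep set \<Rightarrow> ('v \<times> ('a \<times> bool) list) set" where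
  "Bset Q Tt = {w \<in> Str Q. \<exists>D. (w, D) \<in> labels Q \<and> strmod (preproj Q) (str_map w D) \<in> Tt}"

end

theory Submission
  imports Defs
begin

definition chain :: "('v,'b) bq \<Rightarrow> 'v \<times> ('b \<times> bool) list \<Rightarrow> bool" where
  "chain P w \<longleftrightarrow> (snd w \<noteq> [] \<longrightarrow> lsrc P (hd (snd w)) = fst w) \<and>
     (\<forall>i. Suc i < length (snd w) \<longrightarrow> ltgt P (snd w ! i) = lsrc P (snd w ! Suc i))"

lemma string_chain: "is_string P w \<Longrightarrow> chain P w"
  by (cases w) (auto simp: is_string_def chain_def)

lemma svert_Suc: "svert P w (Suc q) = ltgt P (snd w ! q)"
  by (simp add: svert_def)

lemma svert_lsrc: "chain P w \<Longrightarrow> q < length (snd w) \<Longrightarrow> svert P w q = lsrc P (snd w ! q)"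
  by (cases q) (auto simp: chain_def svert_def hd_conv_nth)

definition Ent :: "('v,'b) bq \<Rightarrow> 'v \<times> ('b \<times> bool) list \<Rightarrow> 'b \<Rightarrow> nat \<Rightarrow> nat \<Rightarrow> nat \<Rightarrow> bool" where
  "Ent P w a r c q \<longleftrightarrow> (snd w ! q = (a, True) \<and> c = sidx P w q \<and> r = sidx P w (Suc q)) \<or>
     (snd w ! q = (a, False) \<and> c = sidx P w (Suc q) \<and> r = sidx P w q)"

definition sdim :: "('v,'b) bq \<Rightarrow> 'v \<times> ('b \<times> bool) list \<Rightarrow> 'v \<Rightarrow> nat" where
  "sdim P w v = card {j. j \<le> length (snd w) \<and> svert P w j = v}"

lemma strmod_eq: "strmod P w = (sdim P w, \<lambda>a r c. if \<exists>q<length (snd w). Ent P w a r c q then 1 else 0)"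
  unfolding strmod_def sdim_def Ent_def by (rule refl)

lemma sidx_lt: "j \<le> length (snd w) \<Longrightarrow> sidx P w j < sdim P w (svert P w j)"
  unfolding sidx_def sdim_def
  by (rule psubset_card_mono) auto

lemma sidx_inj: assumes "svert P w j = svert P w j'" "sidx P w j = sidx P w j'" shows "j = j'"
proof (rule ccontr)
  assume "j \<noteq> j'"
  then consider "j < j'" | "j' < j" by linarith
  then show False
  proof cases
    case 1
    have "{i. i < j \<and> svert P w i = svert P w j} \<subset> {i. i < j' \<and> svert P w i = svert P w j'}"
      using 1 assms(1) by auto
    then have "sidx P w j < sidx P w j'" unfolding sidx_def by (rule psubset_card_mono[rotated]) simp
    then show False using assms(2) by simp
  next
    case 2
    have "{i. i < j' \<and> svert P w i = svert P w j'} \<subset> {i. i < j \<and> svert P w i = svert P w j}"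
      using 2 assms(1) by auto
    then have "sidx P w j' < sidx P w j" unfolding sidx_def by (rule psubset_card_mono[rotated]) simp
    then show False using assms(2) by simp
  qed
qed

lemma Ent_range: assumes "chain P w" "q < length (snd w)" "Ent P w a r c q"
  shows "r < sdim P w (qtgt P a) \<and> c < sdim P w (qsrc P a)"
proof -
  have s: "svert P w q = lsrc P (snd w ! q)" using svert_lsrc assms by blast
  have t: "svert P w (Suc q) = ltgt P (snd w ! q)" by (simp add: svert_Suc)
  have l1: "sidx P w q < sdim P w (svert P w q)" using assms(2) by (intro sidx_lt) simp
  have l2: "sidx P w (Suc q) < sdim P w (svert P w (Suc q))" using assms(2) by (intro sidx_lt) simp
  show ?thesis using assms(3) s t l1 l2 unfolding Ent_def by (auto simp: lsrc_def ltgt_def)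
qed


lemma card_split: "card {j. j < Suc (p + k) \<and> R j} = card {j. j \<le> p \<and> R j} + card {i. i < k \<and> R (Suc (p + i))}"
proof (induction k)
  case 0
  then show ?case by (simp add: less_Suc_eq_le)
next
  case (Suc k)
  have e1: "{j. j < Suc (p + Suc k) \<and> R j} = {j. j < Suc (p + k) \<and> R j} \<union> {j. j = Suc (p + k) \<and> R j}" by auto
  have e2: "{i. i < Suc k \<and> R (Suc (p + i))} = {i. i < k \<and> R (Suc (p + i))} \<union> {i. i = k \<and> R (Suc (p + i))}" by auto
  have c1: "card {j. j = Suc (p + k) \<and> R j} = card {i. i = k \<and> R (Suc (p + i))}"
  proof -
    have "{j. j = Suc (p + k) \<and> R j} = (if R (Suc (p + k)) then {Suc (p + k)} else {})" by auto
    moreover have "{i. i = k \<and> R (Suc (p + i))} = (if R (Suc (p + k)) then {k} else {})" by auto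
    ultimately show ?thesis by simp
  qed
  show ?case unfolding e1 e2
    by (subst card_Un_disjoint, simp, simp, force)+ (simp add: Suc c1)
qed


lemma sdel: "(\<Sum>m<(n::nat). if m = j then f m else 0) = (if j < n then f j else (0::'k::field))"
  by (subst sum.delta) auto
lemma sd1: "(\<Sum>m<(n::nat). A m * (if m = j then 1 else 0)) = (if j < n then A j else (0::'k::field))"
proof -
  have "(\<Sum>m<(n::nat). A m * (if m = j then 1 else 0)) = (\<Sum>m<n. if m = j then A m else 0)" by (rule sum.cong) auto
  then show ?thesis by (simp only: sdel)
qed
lemma sd2: "(\<Sum>m<(n::nat). (if i = m then 1 else 0) * A m) = (if i < n then A i else (0::'k::field))"
proof -
  have "(\<Sum>m<(n::nat). (if i = m then 1 else 0) * A m) = (\<Sum>m<n. if m = i then A m else 0)" by (rule sum.cong) auto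
  then show ?thesis by (simp only: sdel)
qed
lemma sd3: "(\<Sum>m<(n::nat). A m * (if j = m + D then 1 else 0)) = (if D \<le> j \<and> j - D < n then A (j - D) else (0::'k::field))"
proof -
  have "(\<Sum>m<(n::nat). A m * (if j = m + D then 1 else 0)) = (\<Sum>m<n. if m = j - D then (if D \<le> j then A m else 0) else 0)"
    by (rule sum.cong) auto
  then show ?thesis by (simp only: sdel) auto
qed
lemma sd4: "(\<Sum>m<(n::nat). (if m = i + D then 1 else 0) * A m) = (if i + D < n then A (i + D) else (0::'k::field))"
proof -
  have "(\<Sum>m<(n::nat). (if m = i + D then 1 else 0) * A m) = (\<Sum>m<n. if m = i + D then A m else 0)" by (rule sum.cong) auto
  then show ?thesis by (simp only: sdel)
qed
lemma sd4': "(\<Sum>m<(n::nat). A m * (if m = i + D then 1 else 0)) = (if i + D < n then A (i + D) else (0::'k::field))"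
proof -
  have "(\<Sum>m<(n::nat). A m * (if m = i + D then 1 else 0)) = (\<Sum>m<n. if m = i + D then A m else 0)" by (rule sum.cong) auto
  then show ?thesis by (simp only: sdel)
qed
lemma sd5: "(\<Sum>m<(n::nat). (if i = m + D then 1 else 0) * A m) = (if D \<le> i \<and> i - D < n then A (i - D) else (0::'k::field))"
proof -
  have "(\<Sum>m<(n::nat). (if i = m + D then 1 else 0) * A m) = (\<Sum>m<n. if m = i - D then (if D \<le> i then A m else 0) else 0)"
    by (rule sum.cong) auto
  then show ?thesis by (simp only: sdel) auto
qed

context
  fixes P :: "('v,'b) bq" and x :: 'v and L1 L2 :: "('b \<times> bool) list" and l :: "'b \<times> bool"
begin

abbreviation "ss \<equiv> (x, L1 @ l # L2)"
abbreviation "s1 \<equiv> (x, L1)"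
abbreviation "s2 \<equiv> (ltgt P l, L2)"

lemma sv_pre: "j \<le> length L1 \<Longrightarrow> svert P ss j = svert P s1 j"
  by (cases j) (auto simp: svert_def nth_append)

lemma sv_suf: "svert P ss (Suc (length L1 + j)) = svert P s2 j"
  by (cases j) (auto simp: svert_def nth_append)

lemma sdim_split: "sdim P ss v = sdim P s1 v + sdim P s2 v"
proof -
  have "sdim P ss v = card {j. j < Suc (length L1 + Suc (length L2)) \<and> svert P ss j = v}"
    unfolding sdim_def by (simp add: less_Suc_eq_le)
  also have "\<dots> = card {j. j \<le> length L1 \<and> svert P ss j = v} + card {i. i < Suc (length L2) \<and> svert P ss (Suc (length L1 + i)) = v}"
    by (rule card_split)
  also have "{j. j \<le> length L1 \<and> svert P ss j = v} = {j. j \<le> length L1 \<and> svert P s1 j = v}"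
    using sv_pre by auto
  also have "{i. i < Suc (length L2) \<and> svert P ss (Suc (length L1 + i)) = v} = {j. j \<le> length L2 \<and> svert P s2 j = v}"
    using sv_suf by (auto simp: less_Suc_eq_le)
  finally show ?thesis unfolding sdim_def by simp
qed

lemma sidx_pre: "j \<le> length L1 \<Longrightarrow> sidx P ss j = sidx P s1 j"
  unfolding sidx_def by (rule arg_cong[where f=card]) (auto simp: sv_pre)

lemma sidx_suf: "sidx P ss (Suc (length L1 + k)) = sdim P s1 (svert P s2 k) + sidx P s2 k"
proof -
  have "sidx P ss (Suc (length L1 + k)) = card {j. j < Suc (length L1 + k) \<and> svert P ss j = svert P s2 k}"
    unfolding sidx_def sv_suf by simp
  also have "\<dots> = card {j. j \<le> length L1 \<and> svert P ss j = svert P s2 k} + card {i. i < k \<and> svert P ss (Suc (length L1 + i)) = svert P s2 k}"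
    by (rule card_split)
  also have "{j. j \<le> length L1 \<and> svert P ss j = svert P s2 k} = {j. j \<le> length L1 \<and> svert P s1 j = svert P s2 k}"
    using sv_pre by auto
  also have "{i. i < k \<and> svert P ss (Suc (length L1 + i)) = svert P s2 k} = {i. i < k \<and> svert P s2 i = svert P s2 k}"
    using sv_suf by auto
  finally show ?thesis unfolding sdim_def sidx_def by simp
qed


lemma chain_s1: assumes "chain P ss" shows "chain P s1"
  unfolding chain_def
proof (intro conjI allI impI)
  assume "snd s1 \<noteq> []"
  then show "lsrc P (hd (snd s1)) = fst s1" using assms by (auto simp: chain_def)
next
  fix i assume "Suc i < length (snd s1)"
  then show "ltgt P (snd s1 ! i) = lsrc P (snd s1 ! Suc i)" using assms[unfolded chain_def, THEN conjunct2, rule_format, of i]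
    by (simp add: nth_append)
qed

lemma chain_s2: assumes "chain P ss" shows "chain P s2"
  unfolding chain_def
proof (intro conjI allI impI)
  assume "snd s2 \<noteq> []"
  then show "lsrc P (hd (snd s2)) = fst s2" using assms[unfolded chain_def, THEN conjunct2, rule_format, of "length L1"]
    by (auto simp: nth_append hd_conv_nth)
next
  fix i assume "Suc i < length (snd s2)"
  then show "ltgt P (snd s2 ! i) = lsrc P (snd s2 ! Suc i)" using assms[unfolded chain_def, THEN conjunct2, rule_format, of "Suc (length L1 + i)"]
    by (simp add: nth_append)
qed

lemma Ent_pre: "q < length L1 \<Longrightarrow> Ent P ss a r c q \<longleftrightarrow> Ent P s1 a r c q"
  unfolding Ent_def by (simp add: nth_append sidx_pre)

lemma Ent_mid: "Ent P ss a r c (length L1) \<longleftrightarrow>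
   (l = (a, True) \<and> c = sidx P s1 (length L1) \<and> r = sdim P s1 (ltgt P l)) \<or>
   (l = (a, False) \<and> c = sdim P s1 (ltgt P l) \<and> r = sidx P s1 (length L1))"
proof -
  have "sidx P ss (Suc (length L1)) = sdim P s1 (ltgt P l)"
    using sidx_suf[of 0] by (simp add: sidx_def svert_def)
  then show ?thesis unfolding Ent_def by (simp add: sidx_pre)
qed

lemma Ent_suf: assumes "chain P ss" "k < length L2"
  shows "Ent P ss a r c (Suc (length L1 + k)) \<longleftrightarrow>
    (sdim P s1 (qtgt P a) \<le> r \<and> sdim P s1 (qsrc P a) \<le> c \<and>
     Ent P s2 a (r - sdim P s1 (qtgt P a)) (c - sdim P s1 (qsrc P a)) k)"
proof -
  have ch: "chain P s2" using chain_s2 assms(1) .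
  have v0: "svert P s2 k = lsrc P (L2 ! k)" using svert_lsrc[OF ch] assms(2) by simp
  have v1: "svert P s2 (Suc k) = ltgt P (L2 ! k)" by (simp add: svert_def)
  have i0: "sidx P ss (Suc (length L1 + k)) = sdim P s1 (svert P s2 k) + sidx P s2 k" by (rule sidx_suf)
  have i1: "sidx P ss (Suc (Suc (length L1 + k))) = sdim P s1 (svert P s2 (Suc k)) + sidx P s2 (Suc k)"
    using sidx_suf[of "Suc k"] by simp
  have n: "(L1 @ l # L2) ! Suc (length L1 + k) = L2 ! k" by (simp add: nth_append)
  show ?thesis unfolding Ent_def using i0 i1 v0 v1 n
    by (auto simp: lsrc_def ltgt_def)
qed

lemma Ent_all: "(\<exists>q<length (L1 @ l # L2). Ent P ss a r c q) \<longleftrightarrow>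
   (\<exists>q<length L1. Ent P ss a r c q) \<or> Ent P ss a r c (length L1) \<or>
   (\<exists>k<length L2. Ent P ss a r c (Suc (length L1 + k)))"
proof
  assume "\<exists>q<length (L1 @ l # L2). Ent P ss a r c q"
  then obtain q where q: "q < length (L1 @ l # L2)" "Ent P ss a r c q" by blast
  consider "q < length L1" | "q = length L1" | "length L1 < q" by linarith
  then show "(\<exists>q<length L1. Ent P ss a r c q) \<or> Ent P ss a r c (length L1) \<or>
   (\<exists>k<length L2. Ent P ss a r c (Suc (length L1 + k)))"
  proof cases
    case 3
    then obtain k where "q = Suc (length L1 + k)" by (metis less_iff_Suc_add add_Suc_right)
    then show ?thesis using q by auto
  qed (use q in auto)
next
  assume "(\<exists>q<length L1. Ent P ss a r c q) \<or> Ent P ss a r c (length L1) \<or>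
   (\<exists>k<length L2. Ent P ss a r c (Suc (length L1 + k)))"
  then show "\<exists>q<length (L1 @ l # L2). Ent P ss a r c q"
    apply (elim disjE exE conjE)
      apply (rule_tac x=q in exI, simp)
     apply (rule_tac x="length L1" in exI, simp)
    apply (rule_tac x="Suc (length L1 + k)" in exI, simp)
    done
qed

lemma K1: assumes ch: "chain P ss" and d: "snd l" and i: "i < sdim P s1 (qtgt P a)"
  shows "(\<exists>q<length (L1 @ l # L2). Ent P ss a i j q) \<longleftrightarrow>
         (j < sdim P s1 (qsrc P a) \<and> (\<exists>q<length L1. Ent P s1 a i j q))"
proof -
  have c1: "chain P s1" using chain_s1 ch .
  have "\<not> Ent P ss a i j (length L1)" using d i unfolding Ent_mid by (auto simp: ltgt_def)
  moreover have "\<not> Ent P ss a i j (Suc (length L1 + k))" if "k < length L2" for k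
    using Ent_suf[OF ch that] i by simp
  moreover have "j < sdim P s1 (qsrc P a)" if "q < length L1" "Ent P s1 a i j q" for q
    using Ent_range[OF c1, of q a i j] that by simp
  ultimately show ?thesis unfolding Ent_all using Ent_pre by blast
qed

lemma Q1: assumes ch: "chain P ss" and d: "snd l"
  shows "surj_morph P (strmod P ss) (strmod P s1) (\<lambda>v i j. if i = j then 1 else (0::'k::field))"
proof -
  have mor: "is_morph P (strmod P ss) (strmod P s1) (\<lambda>v i j. if i = j then 1 else (0::'k::field))"
    unfolding is_morph_def strmod_eq mmul_def
  proof (simp only: prod.case, intro ballI allI impI)
    fix a i j assume i: "i < sdim P s1 (qtgt P a)" and j: "j < sdim P ss (qsrc P a)"
    show "(\<Sum>m<sdim P s1 (qsrc P a). (if \<exists>q<length (snd s1). Ent P s1 a i m q then 1 else 0) * (if m = j then 1 else (0::'k))) =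
          (\<Sum>m<sdim P ss (qtgt P a). (if i = m then 1 else 0) * (if \<exists>q<length (snd ss). Ent P ss a m j q then 1 else 0))"
      unfolding sd1 sd2 using i K1[OF ch d i, of j] by (simp add: sdim_split)
  qed
  show ?thesis unfolding surj_morph_def lin_surj_def mapp_def
  proof (intro conjI mor ballI allI)
    fix v :: 'v and y :: "nat \<Rightarrow> 'k"
    show "\<exists>x. \<forall>i<fst (strmod P s1) v. (\<Sum>j<fst (strmod P ss) v. (if i = j then 1 else 0) * x j) = y i"
      by (rule exI[of _ y]) (simp add: strmod_eq sd2 sdim_split)
  qed
qed

lemma svert_mid: assumes ch: "chain P ss" shows "svert P s1 (length L1) = lsrc P l"
proof -
  have "svert P ss (length L1) = lsrc P ((L1 @ l # L2) ! length L1)" using svert_lsrc[OF ch] by simp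
  then show ?thesis using sv_pre[of "length L1"] by simp
qed

lemma sidx_mid: assumes ch: "chain P ss" shows "sidx P s1 (length L1) < sdim P s1 (lsrc P l)"
  using sidx_lt[of "length L1" s1 P] svert_mid[OF ch] by simp

lemma K2: assumes ch: "chain P ss" and d: "\<not> snd l"
  shows "(\<exists>q<length (L1 @ l # L2). Ent P ss a (i + sdim P s1 (qtgt P a)) j q) \<longleftrightarrow>
         (sdim P s1 (qsrc P a) \<le> j \<and> j - sdim P s1 (qsrc P a) < sdim P s2 (qsrc P a) \<and>
          (\<exists>k<length L2. Ent P s2 a i (j - sdim P s1 (qsrc P a)) k))"
proof -
  have c1: "chain P s1" using chain_s1 ch .
  have c2: "chain P s2" using chain_s2 ch .
  have "\<not> Ent P ss a (i + sdim P s1 (qtgt P a)) j (length L1)"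
    using d sidx_mid[OF ch] unfolding Ent_mid by (auto simp: lsrc_def)
  moreover have "\<not> Ent P s1 a (i + sdim P s1 (qtgt P a)) j q" if "q < length L1" for q
    using Ent_range[OF c1, of q a "i + sdim P s1 (qtgt P a)" j] that by auto
  moreover have "j - sdim P s1 (qsrc P a) < sdim P s2 (qsrc P a)" if "k < length L2" "Ent P s2 a i (j - sdim P s1 (qsrc P a)) k" for k
    using Ent_range[OF c2, of k a i "j - sdim P s1 (qsrc P a)"] that by simp
  moreover have "Ent P ss a (i + sdim P s1 (qtgt P a)) j (Suc (length L1 + k)) \<longleftrightarrow>
      sdim P s1 (qsrc P a) \<le> j \<and> Ent P s2 a i (j - sdim P s1 (qsrc P a)) k" if "k < length L2" for k
    using Ent_suf[OF ch that] by simp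
  ultimately show ?thesis unfolding Ent_all using Ent_pre by blast
qed

lemma Q2: assumes ch: "chain P ss" and d: "\<not> snd l"
  shows "surj_morph P (strmod P ss) (strmod P s2) (\<lambda>v i j. if j = i + sdim P s1 v then 1 else (0::'k::field))"
proof -
  have mor: "is_morph P (strmod P ss) (strmod P s2) (\<lambda>v i j. if j = i + sdim P s1 v then 1 else (0::'k::field))"
    unfolding is_morph_def strmod_eq mmul_def
  proof (simp only: prod.case, intro ballI allI impI)
    fix a i j assume i: "i < sdim P s2 (qtgt P a)" and j: "j < sdim P ss (qsrc P a)"
    show "(\<Sum>m<sdim P s2 (qsrc P a). (if \<exists>q<length (snd s2). Ent P s2 a i m q then 1 else 0) * (if j = m + sdim P s1 (qsrc P a) then 1 else (0::'k))) =
          (\<Sum>m<sdim P ss (qtgt P a). (if m = i + sdim P s1 (qtgt P a) then 1 else 0) * (if \<exists>q<length (snd ss). Ent P ss a m j q then 1 else 0))"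
      unfolding sd3 sd4 using i K2[OF ch d, of a i j] by (simp add: sdim_split)
  qed
  show ?thesis unfolding surj_morph_def lin_surj_def mapp_def
  proof (intro conjI mor ballI allI)
    fix v :: 'v and y :: "nat \<Rightarrow> 'k"
    show "\<exists>x. \<forall>i<fst (strmod P s2) v. (\<Sum>j<fst (strmod P ss) v. (if j = i + sdim P s1 v then 1 else 0) * x j) = y i"
      by (rule exI[of _ "\<lambda>j. y (j - sdim P s1 v)"]) (simp add: strmod_eq sd4 sdim_split)
  qed
qed

lemma K3: assumes ch: "chain P ss" and d: "snd l"
  shows "(\<exists>q<length (L1 @ l # L2). Ent P ss a i (j + sdim P s1 (qsrc P a)) q) \<longleftrightarrow>
         (sdim P s1 (qtgt P a) \<le> i \<and> i - sdim P s1 (qtgt P a) < sdim P s2 (qtgt P a) \<and>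
          (\<exists>k<length L2. Ent P s2 a (i - sdim P s1 (qtgt P a)) j k))"
proof -
  have c1: "chain P s1" using chain_s1 ch .
  have c2: "chain P s2" using chain_s2 ch .
  have "\<not> Ent P ss a i (j + sdim P s1 (qsrc P a)) (length L1)"
    using d sidx_mid[OF ch] unfolding Ent_mid by (auto simp: lsrc_def)
  moreover have "\<not> Ent P s1 a i (j + sdim P s1 (qsrc P a)) q" if "q < length L1" for q
    using Ent_range[OF c1, of q a i "j + sdim P s1 (qsrc P a)"] that by auto
  moreover have "i - sdim P s1 (qtgt P a) < sdim P s2 (qtgt P a)" if "k < length L2" "Ent P s2 a (i - sdim P s1 (qtgt P a)) j k" for k
    using Ent_range[OF c2, of k a "i - sdim P s1 (qtgt P a)" j] that by simp
  moreover have "Ent P ss a i (j + sdim P s1 (qsrc P a)) (Suc (length L1 + k)) \<longleftrightarrow>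
      sdim P s1 (qtgt P a) \<le> i \<and> Ent P s2 a (i - sdim P s1 (qtgt P a)) j k" if "k < length L2" for k
    using Ent_suf[OF ch that] by simp
  ultimately show ?thesis unfolding Ent_all using Ent_pre by blast
qed

lemma E: assumes ch: "chain P ss" and d: "snd l"
  shows "short_exact P (strmod P s2) (strmod P ss) (strmod P s1)
     (\<lambda>v i j. if i = j + sdim P s1 v then 1 else (0::'k::field)) (\<lambda>v i j. if i = j then 1 else 0)"
proof -
  have mor: "is_morph P (strmod P s2) (strmod P ss) (\<lambda>v i j. if i = j + sdim P s1 v then 1 else (0::'k::field))"
    unfolding is_morph_def strmod_eq mmul_def
  proof (simp only: prod.case, intro ballI allI impI)
    fix a i j assume i: "i < sdim P ss (qtgt P a)" and j: "j < sdim P s2 (qsrc P a)"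
    show "(\<Sum>m<sdim P ss (qsrc P a). (if \<exists>q<length (snd ss). Ent P ss a i m q then 1 else 0) * (if m = j + sdim P s1 (qsrc P a) then 1 else (0::'k))) =
          (\<Sum>m<sdim P s2 (qtgt P a). (if i = m + sdim P s1 (qtgt P a) then 1 else 0) * (if \<exists>q<length (snd s2). Ent P s2 a m j q then 1 else 0))"
      unfolding sd4' sd5 using j K3[OF ch d, of a i j] by (simp add: sdim_split)
  qed
  show ?thesis unfolding short_exact_def
  proof (intro conjI mor Q1[OF ch d] ballI allI)
    fix v :: 'v
    show "lin_inj (fst (strmod P s2) v) (fst (strmod P ss) v) (\<lambda>i j. if i = j + sdim P s1 v then 1 else (0::'k))"
      unfolding lin_inj_def mapp_def strmod_eq sd5 fst_conv
    proof (intro allI impI)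
      fix x :: "nat \<Rightarrow> 'k" and j
      assume h: "\<forall>i<sdim P ss v. (if sdim P s1 v \<le> i \<and> i - sdim P s1 v < sdim P s2 v then x (i - sdim P s1 v) else 0) = 0"
        and j: "j < sdim P s2 v"
      show "x j = 0" using h[rule_format, of "j + sdim P s1 v"] j by (simp add: sdim_split)
    qed
    fix y :: "nat \<Rightarrow> 'k"
    show "(\<forall>i<fst (strmod P s1) v. mapp (fst (strmod P ss) v) (\<lambda>i j. if i = j then 1 else 0) y i = 0) =
          (\<exists>x. \<forall>i<fst (strmod P ss) v. mapp (fst (strmod P s2) v) (\<lambda>i j. if i = j + sdim P s1 v then 1 else 0) x i = y i)"
      unfolding mapp_def strmod_eq sd2 sd5 fst_conv
    proof
      assume h: "\<forall>i<sdim P s1 v. (if i < sdim P ss v then y i else 0) = 0"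
      show "\<exists>x. \<forall>i<sdim P ss v. (if sdim P s1 v \<le> i \<and> i - sdim P s1 v < sdim P s2 v then x (i - sdim P s1 v) else 0) = y i"
      proof (rule exI[of _ "\<lambda>k. y (k + sdim P s1 v)"], intro allI impI)
        fix i assume "i < sdim P ss v"
        then show "(if sdim P s1 v \<le> i \<and> i - sdim P s1 v < sdim P s2 v then y (i - sdim P s1 v + sdim P s1 v) else 0) = y i"
          using h[rule_format, of i] by (auto simp: sdim_split)
      qed
    next
      assume "\<exists>x. \<forall>i<sdim P ss v. (if sdim P s1 v \<le> i \<and> i - sdim P s1 v < sdim P s2 v then x (i - sdim P s1 v) else 0) = y i"
      then obtain x where h: "\<forall>i<sdim P ss v. (if sdim P s1 v \<le> i \<and> i - sdim P s1 v < sdim P s2 v then x (i - sdim P s1 v) else 0) = y i" by blast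
      show "\<forall>i<sdim P s1 v. (if i < sdim P ss v then y i else 0) = 0"
      proof (intro allI impI)
        fix i assume "i < sdim P s1 v"
        then show "(if i < sdim P ss v then y i else 0) = 0"
          using h[rule_format, of i] by (simp add: sdim_split)
      qed
    qed
  qed
qed
end


lemma string_cond: assumes "is_string P (x, L)" "Suc i < length L"
  shows "\<not> (fst (L ! i) = fst (L ! Suc i) \<and> snd (L ! i) \<noteq> snd (L ! Suc i)) \<and>
        (snd (L ! i) \<and> snd (L ! Suc i) \<longrightarrow> (fst (L ! Suc i), fst (L ! i)) \<notin> qrels P) \<and>
        (\<not> snd (L ! i) \<and> \<not> snd (L ! Suc i) \<longrightarrow> (fst (L ! i), fst (L ! Suc i)) \<notin> qrels P)"
  using assms unfolding is_string_def by auto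

lemma rel_noEnt:
  assumes w: "is_string P (x, L)" and r: "(b, a) \<in> qrels P" and ab: "qtgt P a = qsrc P b"
    and q: "q < length L" and q': "q' < length L"
    and ea: "Ent P (x, L) a k j q" and eb: "Ent P (x, L) b i k q'"
  shows False
proof -
  have ch: "chain P (x, L)" using string_chain w .
  have sv: "\<And>q. q < length L \<Longrightarrow> svert P (x, L) q = lsrc P (L ! q)" using svert_lsrc[OF ch] by simp
  have st: "\<And>q. svert P (x, L) (Suc q) = ltgt P (L ! q)" by (simp add: svert_Suc)
  have inj: "\<And>j j'. svert P (x, L) j = svert P (x, L) j' \<Longrightarrow> sidx P (x, L) j = sidx P (x, L) j' \<Longrightarrow> j = j'"
    by (rule sidx_inj)
  from ea consider (aT) "L ! q = (a, True)" "k = sidx P (x, L) (Suc q)"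
    | (aF) "L ! q = (a, False)" "k = sidx P (x, L) q" unfolding Ent_def by auto
  then show False
  proof cases
    case aT
    from eb consider (bT) "L ! q' = (b, True)" "k = sidx P (x, L) q'"
      | (bF) "L ! q' = (b, False)" "k = sidx P (x, L) (Suc q')" unfolding Ent_def by auto
    then show False
    proof cases
      case bT
      have "svert P (x, L) (Suc q) = svert P (x, L) q'" using st[of q] sv[OF q'] aT bT ab by (simp add: lsrc_def ltgt_def)
      then have e: "q' = Suc q" using inj aT bT by metis
      show False using string_cond[OF w, of q] e q' aT bT r by simp
    next
      case bF
      have "svert P (x, L) (Suc q) = svert P (x, L) (Suc q')" using st[of q] st[of q'] aT bF ab by (simp add: lsrc_def ltgt_def)
      then have "Suc q = Suc q'" using inj aT bF by metis
      then show False using aT bF by simp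
    qed
  next
    case aF
    from eb consider (bT) "L ! q' = (b, True)" "k = sidx P (x, L) q'"
      | (bF) "L ! q' = (b, False)" "k = sidx P (x, L) (Suc q')" unfolding Ent_def by auto
    then show False
    proof cases
      case bT
      have "svert P (x, L) q = svert P (x, L) q'" using sv[OF q] sv[OF q'] aF bT ab by (simp add: lsrc_def ltgt_def)
      then have "q = q'" using inj aF bT by metis
      then show False using aF bT by simp
    next
      case bF
      have "svert P (x, L) q = svert P (x, L) (Suc q')" using sv[OF q] st[of q'] aF bF ab by (simp add: lsrc_def ltgt_def)
      then have e: "q = Suc q'" using inj aF bF by metis
      show False using string_cond[OF w, of q'] e q aF bF r by simp
    qed
  qed
qed

lemma strmod_rep:
  assumes w: "is_string P (x, L)"
    and V: "\<forall>a\<in>arrs P. qsrc P a \<in> verts P \<and> qtgt P a \<in> verts P"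
    and R: "\<forall>(b, a)\<in>qrels P. qtgt P a = qsrc P b"
  shows "is_rep P (strmod P (x, L) :: ('v, 'b, 'k::field) rep)"
proof -
  have ch: "chain P (x, L)" using string_chain w .
  have xv: "x \<in> verts P" and la: "\<And>l. l \<in> set L \<Longrightarrow> fst l \<in> arrs P" using w unfolding is_string_def by auto
  have svv: "svert P (x, L) j \<in> verts P" if "j \<le> length L" for j
  proof (cases j)
    case 0 then show ?thesis using xv by (simp add: svert_def)
  next
    case (Suc q)
    then have "L ! q \<in> set L" using that by simp
    then have "fst (L ! q) \<in> arrs P" using la by blast
    then show ?thesis using V Suc by (auto simp: svert_def ltgt_def)
  qed
  have c1: "sdim P (x, L) v = 0" if "v \<notin> verts P" for v
    unfolding sdim_def using svv that by fastforce
  have c2: "\<not> Ent P (x, L) a r c q" if "a \<notin> arrs P" "q < length L" for a r c q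
  proof
    assume "Ent P (x, L) a r c q"
    then have "fst (L ! q) = a" unfolding Ent_def by auto
    then show False using la[of "L ! q"] that by simp
  qed
  show ?thesis unfolding is_rep_def strmod_eq prod.case mmul_def
  proof (intro conjI allI impI ballI)
    fix v assume "v \<notin> verts P" then show "sdim P (x, L) v = 0" using c1 by simp
  next
    fix a assume "a \<notin> arrs P"
    then show "(\<lambda>r c. if \<exists>q<length (snd (x, L)). Ent P (x, L) a r c q then 1 else 0) = (\<lambda>i j. 0::'k)"
      using c2 by (auto intro!: ext)
  next
    fix a i j assume "i \<ge> sdim P (x, L) (qtgt P a) \<or> j \<ge> sdim P (x, L) (qsrc P a)"
    then show "(if \<exists>q<length (snd (x, L)). Ent P (x, L) a i j q then 1 else 0) = (0::'k)"
      using Ent_range[OF ch] by fastforce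
  next
    fix ba assume ba: "ba \<in> qrels P"
    obtain b a where bae: "ba = (b, a)" by (cases ba)
    have ab: "qtgt P a = qsrc P b" using R ba bae by auto
    show "case ba of (b, a) \<Rightarrow> \<forall>i<sdim P (x, L) (qtgt P b). \<forall>j<sdim P (x, L) (qsrc P a).
       (\<Sum>m<sdim P (x, L) (qtgt P a). (if \<exists>q<length (snd (x, L)). Ent P (x, L) b i m q then 1 else 0) *
            (if \<exists>q<length (snd (x, L)). Ent P (x, L) a m j q then 1 else 0)) = (0::'k)"
      unfolding bae prod.case
    proof (intro allI impI)
      fix i j
      show "(\<Sum>m<sdim P (x, L) (qtgt P a). (if \<exists>q<length (snd (x, L)). Ent P (x, L) b i m q then 1 else 0) *
            (if \<exists>q<length (snd (x, L)). Ent P (x, L) a m j q then 1 else 0)) = (0::'k)"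
        using rel_noEnt[OF w _ ab] ba bae by (intro sum.neutral ballI) fastforce
    qed
  qed
qed


definition cv :: "bool \<Rightarrow> 'a \<times> bool \<Rightarrow> ('a + 'a) \<times> bool" where
  "cv b l = (case l of (g, e) \<Rightarrow> if b then (if e then Inl g else Inr g, True) else (if e then Inr g else Inl g, False))"

lemma str_map_cv: "str_map w D = (fst w, map (\<lambda>i. cv (i \<in> D) (snd w ! i)) [0..<length (snd w)])"
  unfolding str_map_def cv_def by (rule refl)

lemma cv_snd[simp]: "snd (cv b l) = b"
  by (cases l) (simp add: cv_def)

lemma cv_lsrc[simp]: "lsrc (preproj Q) (cv b l) = lsrc Q l"
  by (cases l) (auto simp: cv_def lsrc_def preproj_def)

lemma cv_ltgt[simp]: "ltgt (preproj Q) (cv b l) = ltgt Q l"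
  by (cases l) (auto simp: cv_def ltgt_def preproj_def)

lemma cv_arr: "fst l \<in> arrs Q \<Longrightarrow> fst (cv b l) \<in> arrs (preproj Q)"
  by (cases l) (auto simp: cv_def preproj_def)

lemma cv_pair:
  assumes "\<not> (fst l1 = fst l2 \<and> snd l1 \<noteq> snd l2)"
    and "snd l1 \<and> snd l2 \<longrightarrow> (fst l2, fst l1) \<notin> qrels Q"
    and "\<not> snd l1 \<and> \<not> snd l2 \<longrightarrow> (fst l1, fst l2) \<notin> qrels Q"
  shows "\<not> (fst (cv b1 l1) = fst (cv b2 l2) \<and> b1 \<noteq> b2) \<and>
        (b1 \<and> b2 \<longrightarrow> (fst (cv b2 l2), fst (cv b1 l1)) \<notin> qrels (preproj Q)) \<and>
        (\<not> b1 \<and> \<not> b2 \<longrightarrow> (fst (cv b1 l1), fst (cv b2 l2)) \<notin> qrels (preproj Q))"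
  using assms by (cases l1; cases l2) (auto simp: cv_def preproj_def split: if_splits)

lemma str_string: assumes w: "is_string Q (x, L)"
  shows "is_string (preproj Q) (str_map (x, L) D)"
proof -
  have xv: "x \<in> verts Q" and la: "\<And>l. l \<in> set L \<Longrightarrow> fst l \<in> arrs Q"
    and hd: "L \<noteq> [] \<Longrightarrow> lsrc Q (hd L) = x"
    and cons: "\<And>i. Suc i < length L \<Longrightarrow> ltgt Q (L ! i) = lsrc Q (L ! Suc i)"
    using w unfolding is_string_def by auto
  show ?thesis unfolding str_map_cv is_string_def fst_conv snd_conv prod.case
  proof (intro conjI allI impI ballI)
    show "x \<in> verts (preproj Q)" using xv by (simp add: preproj_def)
  next
    fix l assume "l \<in> set (map (\<lambda>i. cv (i \<in> D) (L ! i)) [0..<length L])"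
    then obtain i where "i < length L" "l = cv (i \<in> D) (L ! i)" by auto
    then show "fst l \<in> arrs (preproj Q)" using cv_arr[OF la[OF nth_mem]] by simp
  next
    assume "map (\<lambda>i. cv (i \<in> D) (L ! i)) [0..<length L] \<noteq> []"
    then show "lsrc (preproj Q) (hd (map (\<lambda>i. cv (i \<in> D) (L ! i)) [0..<length L])) = x"
      using hd by (simp add: hd_map hd_conv_nth)
  next
    fix i assume i: "Suc i < length (map (\<lambda>i. cv (i \<in> D) (L ! i)) [0..<length L])"
    then have i': "Suc i < length L" by simp
    let ?M = "map (\<lambda>i. cv (i \<in> D) (L ! i)) [0..<length L]"
    have m1: "?M ! i = cv (i \<in> D) (L ! i)" and m2: "?M ! Suc i = cv (Suc i \<in> D) (L ! Suc i)"
      using i' by (simp_all del: upt_Suc)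
    have sc: "\<not> (fst (L ! i) = fst (L ! Suc i) \<and> snd (L ! i) \<noteq> snd (L ! Suc i)) \<and>
        (snd (L ! i) \<and> snd (L ! Suc i) \<longrightarrow> (fst (L ! Suc i), fst (L ! i)) \<notin> qrels Q) \<and>
        (\<not> snd (L ! i) \<and> \<not> snd (L ! Suc i) \<longrightarrow> (fst (L ! i), fst (L ! Suc i)) \<notin> qrels Q)"
      using string_cond[OF w i'] .
    show "ltgt (preproj Q) (?M ! i) = lsrc (preproj Q) (?M ! Suc i)"
      unfolding m1 m2 using cons[OF i'] by simp
    show "\<not> (fst (?M ! i) = fst (?M ! Suc i) \<and> snd (?M ! i) \<noteq> snd (?M ! Suc i))"
      unfolding m1 m2 using cv_pair[of "L ! i" "L ! Suc i" Q "i \<in> D" "Suc i \<in> D"] sc by simp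
    show "(fst (?M ! Suc i), fst (?M ! i)) \<notin> qrels (preproj Q)" if "snd (?M ! i) \<and> snd (?M ! Suc i)"
      using that unfolding m1 m2 using cv_pair[of "L ! i" "L ! Suc i" Q "i \<in> D" "Suc i \<in> D"] sc by simp
    show "(fst (?M ! i), fst (?M ! Suc i)) \<notin> qrels (preproj Q)" if "\<not> snd (?M ! i) \<and> \<not> snd (?M ! Suc i)"
      using that unfolding m1 m2 using cv_pair[of "L ! i" "L ! Suc i" Q "i \<in> D" "Suc i \<in> D"] sc by simp
  qed
qed

lemma spec_cv: "(case fst (cv b l) of Inl g \<Rightarrow> (g, b) | Inr g \<Rightarrow> (g, \<not> b)) = l"
  by (cases l) (auto simp: cv_def)

lemma spec_str: "specialize (str_map w D) = w"
proof -
  have "map (\<lambda>(a, b). case a of Inl g \<Rightarrow> (g, b) | Inr g \<Rightarrow> (g, \<not> b)) (map (\<lambda>i. cv (i \<in> D) (snd w ! i)) [0..<length (snd w)])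
        = map (\<lambda>i. snd w ! i) [0..<length (snd w)]"
    by (simp add: case_prod_beta spec_cv)
  also have "\<dots> = snd w" by (rule map_nth)
  finally show ?thesis unfolding specialize_def str_map_cv by simp
qed


lemma iso_dsum_zero: assumes "is_rep P N" shows "isomorphic P N (dsum P N (zero_rep :: ('v,'b,'k::field) rep))"
proof -
  obtain d m where N: "N = (d, m)" by (cases N)
  have rg: "\<And>a i j. a \<in> arrs P \<Longrightarrow> i \<ge> d (qtgt P a) \<or> j \<ge> d (qsrc P a) \<Longrightarrow> m a i j = 0"
    using assms unfolding N is_rep_def by auto
  have ds: "dsum P (d, m) (zero_rep :: ('v,'b,'k::field) rep) = (d, \<lambda>a i j. if i < d (qtgt P a) \<and> j < d (qsrc P a) then m a i j else 0)"
    unfolding N dsum_def zero_rep_def by (auto intro!: ext)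
  let ?f = "\<lambda>(v::'v) (i::nat) (j::nat). if i = j then 1 else (0::'k)"
  have "iso_morph P (d, m) (dsum P (d, m) zero_rep) ?f"
    unfolding iso_morph_def is_morph_def ds prod.case fst_conv lin_surj_def lin_inj_def mapp_def mmul_def
  proof (intro conjI ballI allI impI)
    fix a i j assume "i < d (qtgt P a)" "j < d (qsrc P a)"
    then show "(\<Sum>ma<d (qsrc P a). (if i < d (qtgt P a) \<and> ma < d (qsrc P a) then m a i ma else 0) * (if ma = j then 1 else 0)) =
       (\<Sum>ma<d (qtgt P a). (if i = ma then 1 else 0) * m a ma j)"
      unfolding sd1 sd2 by simp
  next
    fix v and y :: "nat \<Rightarrow> 'k" show "\<exists>x. \<forall>i<d v. (\<Sum>j<d v. (if i = j then 1 else 0) * x j) = y i"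
      by (rule exI[of _ y]) (simp add: sd2)
  next
    fix v x j assume "\<forall>i<d v. (\<Sum>j<d v. (if i = j then 1 else 0) * x j) = (0::'k)" "j < d v"
    then show "x j = 0" by (auto simp: sd2)
  qed
  then show ?thesis unfolding isomorphic_def N by blast
qed

lemma gentle_V: "gentle Q \<Longrightarrow> \<forall>a\<in>arrs (preproj Q). qsrc (preproj Q) a \<in> verts (preproj Q) \<and> qtgt (preproj Q) a \<in> verts (preproj Q)"
  unfolding gentle_def preproj_def by auto

lemma gentle_R: "gentle Q \<Longrightarrow> \<forall>(b, a)\<in>qrels (preproj Q). qtgt (preproj Q) a = qsrc (preproj Q) b"
  unfolding gentle_def preproj_def by auto

lemma str_map_fst[simp]: "fst (str_map w D) = fst w"
  by (simp add: str_map_def)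

lemma label_rep: assumes G: "gentle Q" and w: "is_string Q w"
  shows "is_rep (preproj Q) (strmod (preproj Q) (str_map w D) :: ('v,'a+'a,'k::field) rep)"
proof -
  obtain x L where wx: "w = (x, L)" by (cases w)
  have e: "str_map w D = (x, snd (str_map w D))" using wx by (metis str_map_fst fst_conv prod.collapse)
  have "is_string (preproj Q) (x, snd (str_map w D))" using str_string[of Q x L D] w wx e by simp
  from strmod_rep[OF this gentle_V[OF G] gentle_R[OF G]] show ?thesis using e by simp
qed

lemma label_Mcat: assumes G: "gentle Q" and w: "is_string Q w"
  shows "(strmod (preproj Q) (str_map w D) :: ('v,'a+'a,'k::field) rep) \<in> Mcat Q"
proof -
  let ?N = "strmod (preproj Q) (str_map w D) :: ('v,'a+'a,'k::field) rep"
  obtain x L where wx: "w = (x, L)" by (cases w)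
  have r: "is_rep (preproj Q) ?N" by (rule label_rep[OF G w])
  have s: "is_string (preproj Q) (str_map w D)" using str_string[of Q x L D] w wx by simp
  have "isomorphic (preproj Q) ?N (foldr (dsum (preproj Q)) (map (strmod (preproj Q)) [str_map w D]) zero_rep)"
    using iso_dsum_zero[OF r] by simp
  then show ?thesis unfolding Mcat_def using r s w spec_str[of w D]
    by (intro CollectI conjI exI[of _ "[str_map w D]"]) auto
qed

lemma str_map_split:
  "str_map (fst u, snd u @ l # snd v) D =
   (fst u, snd (str_map u {i \<in> D. i < length (snd u)}) @ cv (length (snd u) \<in> D) l #
      snd (str_map v {k. Suc (length (snd u) + k) \<in> D}))"
proof -
  let ?p = "length (snd u)"
  have "map (\<lambda>i. cv (i \<in> D) ((snd u @ l # snd v) ! i)) [0..<length (snd u @ l # snd v)] =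
     map (\<lambda>i. cv (i \<in> {i \<in> D. i < ?p}) (snd u ! i)) [0..<?p] @ cv (?p \<in> D) l #
     map (\<lambda>i. cv (i \<in> {k. Suc (?p + k) \<in> D}) (snd v ! i)) [0..<length (snd v)]"
    (is "?A = ?B")
  proof (rule nth_equalityI)
    show "length ?A = length ?B" by simp
  next
    fix i assume "i < length ?A"
    then have i: "i < Suc (?p + length (snd v))" by simp
    have "i < ?p \<or> i = ?p \<or> (i = Suc (?p + (i - Suc ?p)) \<and> i - Suc ?p < length (snd v))" using i by linarith
    then consider "i < ?p" | "i = ?p" | k where "i = Suc (?p + k)" "k < length (snd v)" by blast
    then show "?A ! i = ?B ! i"
    proof cases
      case 1 then show ?thesis using i by (simp add: nth_append del: upt_Suc)
    next
      case 2 then show ?thesis by (simp add: nth_append del: upt_Suc)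
    next
      case 3 then show ?thesis by (simp add: nth_append del: upt_Suc)
    qed
  qed
  then show ?thesis unfolding str_map_cv by simp
qed


theorem lemma6p8:
  fixes Q :: "('v, 'a) bq" and Tt :: "('v, 'a + 'a, 'k::field) rep set"
  assumes "brick_gentle Q TYPE('k)"
    and "Tt \<in> torshad Q"
  shows "biclosed Q (Bset Q Tt)"
proof -
  have G: "gentle Q" using assms(1) by (simp add: brick_gentle_def)
  obtain T where T: "torsion_class (preproj Q) T" and Tt: "Tt = T \<inter> Mcat Q"
    using assms(2) unfolding torshad_def by blast
  have quot: "\<And>M N f. M \<in> T \<Longrightarrow> is_rep (preproj Q) N \<Longrightarrow> surj_morph (preproj Q) M N f \<Longrightarrow> N \<in> T"
    using T unfolding torsion_class_def by blast
  have ext: "\<And>L M N f g. L \<in> T \<Longrightarrow> N \<in> T \<Longrightarrow> is_rep (preproj Q) M \<Longrightarrow> short_exact (preproj Q) L M N f g \<Longrightarrow> M \<in> T"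
    using T unfolding torsion_class_def by blast
  have inB: "w \<in> Bset Q Tt" if "is_string Q w" "D \<subseteq> {..<length (snd w)}"
      "(strmod (preproj Q) (str_map w D) :: ('v, 'a + 'a, 'k) rep) \<in> T" for w D
    using that label_Mcat[OF G that(1), of D] unfolding Bset_def labels_def Str_def Tt by auto
  have decomp: "\<exists>l'. snd l' = (length (snd u) \<in> D) \<and> ltgt (preproj Q) l' = ltgt Q l \<and>
      str_map (fst u, snd u @ l # snd v) D =
      (fst u, snd (str_map u {i \<in> D. i < length (snd u)}) @ l' # snd (str_map v {k. Suc (length (snd u) + k) \<in> D}))"
    for u v :: "'v \<times> ('a \<times> bool) list" and l D
    using str_map_split[of u l v D] by (intro exI[of _ "cv (length (snd u) \<in> D) l"]) simp
  have chainc: "chain (preproj Q) (str_map c D)" if "is_string Q c" for c D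
  proof -
    obtain x L where "c = (x, L)" by (cases c)
    then show ?thesis using str_string[of Q x L D] that string_chain by blast
  qed
  show ?thesis unfolding biclosed_def closed_set_def
  proof (intro conjI ballI subsetI)
    fix w assume "w \<in> Bset Q Tt" then show "w \<in> Str Q" unfolding Bset_def by blast
  next
    fix u v c assume u: "u \<in> Bset Q Tt" and v: "v \<in> Bset Q Tt" and c: "c \<in> concatenations Q u v"
    from u obtain Du where Du: "(u, Du) \<in> labels Q" "strmod (preproj Q) (str_map u Du) \<in> Tt" unfolding Bset_def by blast
    from v obtain Dv where Dv: "(v, Dv) \<in> labels Q" "strmod (preproj Q) (str_map v Dv) \<in> Tt" unfolding Bset_def by blast
    from c obtain l where ce: "c = (fst u, snd u @ l # snd v)" and lt: "ltgt Q l = fst v" and cS: "is_string Q c"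
      unfolding concatenations_def Str_def by auto
    let ?p = "length (snd u)"
    define D where "D = Du \<union> {?p} \<union> (\<lambda>k. Suc (?p + k)) ` Dv"
    have Du': "Du \<subseteq> {..<?p}" and Dv': "Dv \<subseteq> {..<length (snd v)}" using Du(1) Dv(1) unfolding labels_def by auto
    have D1: "{i \<in> D. i < ?p} = Du" using Du' unfolding D_def by auto
    have D2: "{k. Suc (?p + k) \<in> D} = Dv" using Du' unfolding D_def by auto
    have Dc: "D \<subseteq> {..<length (snd c)}" using Du' Dv' unfolding D_def ce by auto
    obtain l' where l': "snd l'" "ltgt (preproj Q) l' = fst v"
      and se: "str_map c D = (fst u, snd (str_map u Du) @ l' # snd (str_map v Dv))"
      using decomp[of u D l v] unfolding D1 D2 ce[symmetric] lt by (auto simp: D_def)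
    obtain L1 where e1: "str_map u Du = (fst u, L1)" by (metis str_map_fst prod.collapse)
    obtain L2 where e2: "str_map v Dv = (fst v, L2)" by (metis str_map_fst prod.collapse)
    have se': "str_map c D = (fst u, L1 @ l' # L2)" using se e1 e2 by simp
    have ch: "chain (preproj Q) (fst u, L1 @ l' # L2)"
      using chainc[OF cS, of D] se' by simp
    have ex: "\<exists>f g. short_exact (preproj Q) (strmod (preproj Q) (str_map v Dv)) (strmod (preproj Q) (str_map c D))
        (strmod (preproj Q) (str_map u Du) :: ('v, 'a + 'a, 'k) rep) f g"
      unfolding se' e1 e2 using E[OF ch l'(1), unfolded l'(2)] by blast
    have "strmod (preproj Q) (str_map c D) \<in> T"
      using ext[OF _ _ label_rep[OF G cS]] ex Du(2) Dv(2) Tt by blast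
    then show "c \<in> Bset Q Tt" using inB[OF cS Dc] by blast
  next
    fix u v c assume u: "u \<in> Str Q - Bset Q Tt" and v: "v \<in> Str Q - Bset Q Tt" and c: "c \<in> concatenations Q u v"
    from c obtain l where ce: "c = (fst u, snd u @ l # snd v)" and lt: "ltgt Q l = fst v" and cS: "is_string Q c"
      unfolding concatenations_def Str_def by auto
    have uS: "is_string Q u" and vS: "is_string Q v" using u v unfolding Str_def by auto
    show "c \<in> Str Q - Bset Q Tt"
    proof
      show "c \<in> Str Q" using cS unfolding Str_def by simp
    next
      show "c \<notin> Bset Q Tt"
      proof
        assume "c \<in> Bset Q Tt"
        then obtain D where MT: "strmod (preproj Q) (str_map c D) \<in> T" and DL: "(c, D) \<in> labels Q"
          unfolding Bset_def Tt by blast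
        let ?p = "length (snd u)"
        define Du where "Du = {i \<in> D. i < ?p}"
        define Dv where "Dv = {k. Suc (?p + k) \<in> D}"
        obtain l' where l': "snd l' = (?p \<in> D)" "ltgt (preproj Q) l' = fst v"
          and se: "str_map c D = (fst u, snd (str_map u Du) @ l' # snd (str_map v Dv))"
          using decomp[of u D l v] unfolding Du_def Dv_def ce[symmetric] lt by blast
        obtain L1 where e1: "str_map u Du = (fst u, L1)" by (metis str_map_fst prod.collapse)
        obtain L2 where e2: "str_map v Dv = (fst v, L2)" by (metis str_map_fst prod.collapse)
        have se': "str_map c D = (fst u, L1 @ l' # L2)" using se e1 e2 by simp
        have ch: "chain (preproj Q) (fst u, L1 @ l' # L2)"
          using chainc[OF cS, of D] se' by simp
        show False
        proof (cases "snd l'")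
          case True
          have sm: "\<exists>f. surj_morph (preproj Q) (strmod (preproj Q) (str_map c D)) (strmod (preproj Q) (str_map u Du) :: ('v, 'a + 'a, 'k) rep) f"
            unfolding se' e1 using Q1[OF ch True] by blast
          have "strmod (preproj Q) (str_map u Du) \<in> T" using quot[OF MT label_rep[OF G uS]] sm by blast
          moreover have "Du \<subseteq> {..<length (snd u)}" unfolding Du_def by auto
          ultimately have "u \<in> Bset Q Tt" using inB[OF uS] by blast
          then show False using u by blast
        next
          case False
          have sm: "\<exists>f. surj_morph (preproj Q) (strmod (preproj Q) (str_map c D)) (strmod (preproj Q) (str_map v Dv) :: ('v, 'a + 'a, 'k) rep) f"
            unfolding se' e2 using Q2[OF ch False, unfolded l'(2)] by blast
          have "strmod (preproj Q) (str_map v Dv) \<in> T" using quot[OF MT label_rep[OF G vS]] sm by blast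
          moreover have "Dv \<subseteq> {..<length (snd v)}"
          proof
            fix k assume "k \<in> Dv"
            then have "Suc (?p + k) \<in> D" unfolding Dv_def by simp
            moreover have "D \<subseteq> {..<length (snd c)}" using DL unfolding labels_def by simp
            ultimately show "k \<in> {..<length (snd v)}" unfolding ce by auto
          qed
          ultimately have "v \<in> Bset Q Tt" using inB[OF vS] by blast
          then show False using v by blast
        qed
      qed
    qed
  qed
qed

end
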